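(* Let $\mathcal{LS}_{\mathfrak{B}_1}\langle X\rangle$ be the free algebra over a field of characteristic $0$ in the variety of left-symmetric algebras satisfying $(ab)c-(ba)c-(ac)b+(ca)b+(bc)a-(cb)a=0$, and equip it with the anticommutator $\{a,b\}=ab+ba$. Then every polynomial identity of degree at most $4$ satisfied by $(\mathcal{LS}_{\mathfrak{B}_1}\langle X\rangle,\{\cdot,\cdot\})$ is a consequence of commutativity.
   Context: A left-symmetric algebra is an algebra with $(a,b,c)=(b,a,c)$, where $(a,b,c)=(ab)c-a(bc)$. *)

theory Defs
  imports Main "HOL-Library.Poly_Mapping"
begin

datatype 'x namon = NV 'x | NM "'x namon" "'x namon"

fun namon_deg :: "'x namon \<Rightarrow> nat" where
  "namon_deg (NV x) = 1"
| "namon_deg (NM a b) = namon_deg a + namon_deg b"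

text \<open>Elements of the free nonassociative (non-unital) algebra k{X}:
  finitely supported k-linear combinations of nonassociative monomials.\<close>
type_synonym ('k, 'x) napoly = "'x namon \<Rightarrow>\<^sub>0 'k"

definition na_smult :: "'k::field \<Rightarrow> ('k, 'x) napoly \<Rightarrow> ('k, 'x) napoly" where
  "na_smult c p = Poly_Mapping.map (\<lambda>v. c * v) p"

definition na_var :: "'x \<Rightarrow> ('k::field, 'x) napoly" where
  "na_var x = Poly_Mapping.single (NV x) 1"

definition na_mul :: "('k::field, 'x) napoly \<Rightarrow> ('k, 'x) napoly \<Rightarrow> ('k, 'x) napoly" where
  "na_mul p q = (\<Sum>a\<in>Poly_Mapping.keys p. \<Sum>b\<in>Poly_Mapping.keys q.
       Poly_Mapping.single (NM a b) (Poly_Mapping.lookup p a * Poly_Mapping.lookup q b))"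

definition na_anticomm :: "('k::field, 'x) napoly \<Rightarrow> ('k, 'x) napoly \<Rightarrow> ('k, 'x) napoly" where
  "na_anticomm p q = na_mul p q + na_mul q p"

fun namon_eval :: "('a \<Rightarrow> 'a \<Rightarrow> 'a) \<Rightarrow> ('v \<Rightarrow> 'a) \<Rightarrow> 'v namon \<Rightarrow> 'a" where
  "namon_eval mul \<sigma> (NV y) = \<sigma> y"
| "namon_eval mul \<sigma> (NM a b) = mul (namon_eval mul \<sigma> a) (namon_eval mul \<sigma> b)"

definition na_eval ::
  "(('k::field, 'x) napoly \<Rightarrow> ('k, 'x) napoly \<Rightarrow> ('k, 'x) napoly)
    \<Rightarrow> ('v \<Rightarrow> ('k, 'x) napoly) \<Rightarrow> ('k, 'v) napoly \<Rightarrow> ('k, 'x) napoly" where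
  "na_eval mul \<sigma> f = (\<Sum>m\<in>Poly_Mapping.keys f. na_smult (Poly_Mapping.lookup f m) (namon_eval mul \<sigma> m))"

inductive_set T_ideal :: "('k::field, 'v) napoly set \<Rightarrow> ('k, 'x) napoly set"
  for S :: "('k, 'v) napoly set" where
  subst: "s \<in> S \<Longrightarrow> na_eval na_mul \<sigma> s \<in> T_ideal S"
| zero: "0 \<in> T_ideal S"
| add: "a \<in> T_ideal S \<Longrightarrow> b \<in> T_ideal S \<Longrightarrow> a + b \<in> T_ideal S"
| smult: "a \<in> T_ideal S \<Longrightarrow> na_smult c a \<in> T_ideal S"
| mul_left: "a \<in> T_ideal S \<Longrightarrow> na_mul p a \<in> T_ideal S"
| mul_right: "a \<in> T_ideal S \<Longrightarrow> na_mul a p \<in> T_ideal S"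

abbreviation (input) nx :: "nat \<Rightarrow> ('k::field, nat) napoly" where
  "nx i \<equiv> na_var i"

definition na_assoc :: "('k::field, 'x) napoly \<Rightarrow> ('k, 'x) napoly \<Rightarrow> ('k, 'x) napoly \<Rightarrow> ('k, 'x) napoly" where
  "na_assoc a b c = na_mul (na_mul a b) c - na_mul a (na_mul b c)"

definition ls_identity :: "('k::field, nat) napoly" where
  "ls_identity = na_assoc (nx 0) (nx 1) (nx 2) - na_assoc (nx 1) (nx 0) (nx 2)"

definition B1_identity :: "('k::field, nat) napoly" where
  "B1_identity =
     na_mul (na_mul (nx 0) (nx 1)) (nx 2) - na_mul (na_mul (nx 1) (nx 0)) (nx 2)
   - na_mul (na_mul (nx 0) (nx 2)) (nx 1) + na_mul (na_mul (nx 2) (nx 0)) (nx 1)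
   + na_mul (na_mul (nx 1) (nx 2)) (nx 0) - na_mul (na_mul (nx 2) (nx 1)) (nx 0)"

text \<open>The free algebra LS_B1<X> is k{X} / T_ideal {ls_identity, B1_identity}.\<close>
definition LSB1_rel :: "('k::field, 'x) napoly set" where
  "LSB1_rel = T_ideal {ls_identity, B1_identity}"

text \<open>f is a polynomial identity of (LS_B1<X>, {,}): for every substitution of elements of
  the free algebra (represented by elements of k{X}), the value of f computed with the
  anticommutator vanishes in the quotient, i.e. lies in LSB1_rel (the quotient map is an
  algebra homomorphism, so the anticommutator in the quotient is induced by the one on k{X}).\<close>
definition is_identity_LSB1_anticomm :: "'x itself \<Rightarrow> ('k::field, 'v) napoly \<Rightarrow> bool" where
  "is_identity_LSB1_anticomm _ f \<longleftrightarrow>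
     (\<forall>\<sigma> :: 'v \<Rightarrow> ('k, 'x) napoly. na_eval na_anticomm \<sigma> f \<in> LSB1_rel)"

definition comm_identity :: "('k::field, nat) napoly" where
  "comm_identity = na_mul (nx 0) (nx 1) - na_mul (nx 1) (nx 0)"

definition consequence_of_comm :: "('k::field, 'v) napoly \<Rightarrow> bool" where
  "consequence_of_comm f \<longleftrightarrow> f \<in> T_ideal {comm_identity}"

definition na_deg_le :: "('k::zero, 'v) napoly \<Rightarrow> nat \<Rightarrow> bool" where
  "na_deg_le f d \<longleftrightarrow> (\<forall>m\<in>Poly_Mapping.keys f. namon_deg m \<le> d)"

end

theory Submission
  imports Defs
begin


lemma lookup_smult[simp]: "Poly_Mapping.lookup (na_smult c p) k = c * Poly_Mapping.lookup p k"
  by (simp add: na_smult_def map.rep_eq when_def)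

lemma keys_smult: "Poly_Mapping.keys (na_smult c p) \<subseteq> Poly_Mapping.keys p"
  by (auto simp: in_keys_iff)

lemma lookup_na_mul_NV[simp]: "Poly_Mapping.lookup (na_mul p q) (NV x) = 0"
  by (simp add: na_mul_def lookup_sum lookup_single)

lemma lookup_na_mul_NM[simp]:
  "Poly_Mapping.lookup (na_mul p q) (NM a b) = Poly_Mapping.lookup p a * Poly_Mapping.lookup q b"
proof -
  let ?X = "\<lambda>a' b'. Poly_Mapping.lookup p a' * Poly_Mapping.lookup q b'"
  have "Poly_Mapping.lookup (na_mul p q) (NM a b) =
    (\<Sum>a'\<in>Poly_Mapping.keys p. \<Sum>b'\<in>Poly_Mapping.keys q. (?X a' b' when NM a' b' = NM a b))"
    by (simp add: na_mul_def lookup_sum lookup_single)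
  also have "\<dots> = (\<Sum>a'\<in>Poly_Mapping.keys p. if a' = a then (\<Sum>b'\<in>Poly_Mapping.keys q.
        (if b' = b then ?X a' b' else 0)) else 0)"
  proof (rule sum.cong[OF refl])
    fix a' show "(\<Sum>b'\<in>Poly_Mapping.keys q. (?X a' b' when NM a' b' = NM a b)) =
      (if a' = a then (\<Sum>b'\<in>Poly_Mapping.keys q. (if b' = b then ?X a' b' else 0)) else 0)"
      by (cases "a' = a") (simp_all add: when_def)
  qed
  also have "\<dots> = ?X a b"
    by (simp only: sum.delta sum.delta' finite_keys) (auto simp: in_keys_iff)
  finally show ?thesis .
qed

lemma keys_na_mul: "m \<in> Poly_Mapping.keys (na_mul p q) \<Longrightarrow>
   \<exists>a b. m = NM a b \<and> a \<in> Poly_Mapping.keys p \<and> b \<in> Poly_Mapping.keys q"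
  by (cases m) (auto simp: in_keys_iff)

lemma na_mul_add_left: "na_mul (p + p') q = na_mul p q + na_mul p' q"
  by (rule poly_mapping_eqI, case_tac k) (auto simp: lookup_add algebra_simps)
lemma na_mul_add_right: "na_mul q (p + p') = na_mul q p + na_mul q p'"
  by (rule poly_mapping_eqI, case_tac k) (auto simp: lookup_add algebra_simps)
lemma na_mul_minus_left: "na_mul (p - p') q = na_mul p q - na_mul p' q"
  by (rule poly_mapping_eqI, case_tac k) (auto simp: lookup_minus algebra_simps)
lemma na_mul_minus_right: "na_mul q (p - p') = na_mul q p - na_mul q p'"
  by (rule poly_mapping_eqI, case_tac k) (auto simp: lookup_minus algebra_simps)
lemma na_mul_smult_left: "na_mul (na_smult c p) q = na_smult c (na_mul p q)"
  by (rule poly_mapping_eqI, case_tac k) (auto simp: algebra_simps)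
lemma na_mul_smult_right: "na_mul q (na_smult c p) = na_smult c (na_mul q p)"
  by (rule poly_mapping_eqI, case_tac k) (auto simp: algebra_simps)
lemma na_mul_zero_left[simp]: "na_mul 0 q = 0"
  by (rule poly_mapping_eqI, case_tac k) auto
lemma na_mul_zero_right[simp]: "na_mul q 0 = 0"
  by (rule poly_mapping_eqI, case_tac k) auto
lemma na_mul_single[simp]:
  "na_mul (Poly_Mapping.single a c) (Poly_Mapping.single b d) = Poly_Mapping.single (NM a b) (c * d)"
  by (rule poly_mapping_eqI, case_tac k) (auto simp: lookup_single when_def)

lemma smult_add: "na_smult c (p + q) = na_smult c p + na_smult c q"
  by (rule poly_mapping_eqI) (simp add: lookup_add algebra_simps)
lemma smult_add2: "na_smult (c + d) p = na_smult c p + na_smult d p"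
  by (rule poly_mapping_eqI) (simp add: lookup_add algebra_simps)
lemma smult_zero[simp]: "na_smult c 0 = 0"
  by (rule poly_mapping_eqI) simp
lemma smult_zero2[simp]: "na_smult 0 p = 0"
  by (rule poly_mapping_eqI) simp
lemma smult_one[simp]: "na_smult 1 p = p"
  by (rule poly_mapping_eqI) simp
lemma smult_minus1: "na_smult (-1) p = - p"
  by (rule poly_mapping_eqI) simp
lemma smult_single: "na_smult c (Poly_Mapping.single m d) = Poly_Mapping.single m (c * d)"
  by (rule poly_mapping_eqI) (simp add: lookup_single when_def)

lemma poly_sum_singles:
  "p = (\<Sum>m\<in>Poly_Mapping.keys p. na_smult (Poly_Mapping.lookup p m) (Poly_Mapping.single m 1))"
  by (rule poly_mapping_eqI) (simp add: lookup_sum smult_single lookup_single when_def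
      sum.delta' in_keys_iff)



lemma smult_diff2: "na_smult (c - d) p = na_smult c p - na_smult d p"
  by (rule poly_mapping_eqI) (simp add: lookup_minus algebra_simps)
lemma smult_diff: "na_smult c (p - q) = na_smult c p - na_smult c q"
  by (rule poly_mapping_eqI) (simp add: lookup_minus algebra_simps)
lemma smult_smult: "na_smult c (na_smult d p) = na_smult (c * d) p"
  by (rule poly_mapping_eqI) (simp add: algebra_simps)
lemma smult_sum: "na_smult c (sum f A) = (\<Sum>a\<in>A. na_smult c (f a))"
  by (induction A rule: infinite_finite_induct) (auto simp: smult_add)

lemma na_eval_superset:
  assumes "finite S" "Poly_Mapping.keys f \<subseteq> S"
  shows "na_eval mul \<sigma> f = (\<Sum>m\<in>S. na_smult (Poly_Mapping.lookup f m) (namon_eval mul \<sigma> m))"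
  unfolding na_eval_def
  by (rule sum.mono_neutral_left) (use assms in \<open>auto simp: in_keys_iff\<close>)

lemma na_eval_add: "na_eval mul \<sigma> (p + q) = na_eval mul \<sigma> p + na_eval mul \<sigma> q"
proof -
  let ?S = "Poly_Mapping.keys p \<union> Poly_Mapping.keys q"
  have "na_eval mul \<sigma> (p + q) = (\<Sum>m\<in>?S. na_smult (Poly_Mapping.lookup (p+q) m) (namon_eval mul \<sigma> m))"
    by (rule na_eval_superset) (auto dest: set_mp[OF keys_add])
  also have "\<dots> = na_eval mul \<sigma> p + na_eval mul \<sigma> q"
    by (simp add: na_eval_superset[of ?S p] na_eval_superset[of ?S q] lookup_add smult_add2 sum.distrib)
  finally show ?thesis .
qed

lemma na_eval_diff: "na_eval mul \<sigma> (p - q) = na_eval mul \<sigma> p - na_eval mul \<sigma> q"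
proof -
  let ?S = "Poly_Mapping.keys p \<union> Poly_Mapping.keys q"
  have "na_eval mul \<sigma> (p - q) = (\<Sum>m\<in>?S. na_smult (Poly_Mapping.lookup (p-q) m) (namon_eval mul \<sigma> m))"
    by (rule na_eval_superset) (auto simp: in_keys_iff lookup_minus)
  also have "\<dots> = na_eval mul \<sigma> p - na_eval mul \<sigma> q"
    by (simp add: na_eval_superset[of ?S p] na_eval_superset[of ?S q] lookup_minus smult_diff2 sum_subtractf)
  finally show ?thesis .
qed

lemma na_eval_single: "na_eval mul \<sigma> (Poly_Mapping.single m c) = na_smult c (namon_eval mul \<sigma> m)"
  by (cases "c = 0") (simp_all add: na_eval_def)

lemma na_var_single: "na_var x = Poly_Mapping.single (NV x) 1"
  by (simp add: na_var_def)

definition LSx where "LSx P Q R = na_assoc P Q R - na_assoc Q P R"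
definition B1x where "B1x a b c =
     na_mul (na_mul a b) c - na_mul (na_mul b a) c
   - na_mul (na_mul a c) b + na_mul (na_mul c a) b
   + na_mul (na_mul b c) a - na_mul (na_mul c b) a"

lemma eval_ls: "na_eval na_mul \<tau> ls_identity = LSx (\<tau> 0) (\<tau> 1) (\<tau> 2)"
  by (simp add: ls_identity_def LSx_def na_assoc_def na_var_single na_eval_add na_eval_diff na_eval_single)

lemma eval_B1: "na_eval na_mul \<tau> B1_identity = B1x (\<tau> 0) (\<tau> 1) (\<tau> 2)"
  by (simp add: B1_identity_def B1x_def na_var_single na_eval_add na_eval_diff na_eval_single)

lemma eval_comm: "na_eval na_mul \<tau> comm_identity = na_mul (\<tau> 0) (\<tau> 1) - na_mul (\<tau> 1) (\<tau> 0)"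
  by (simp add: comm_identity_def na_var_single na_eval_add na_eval_diff na_eval_single)

lemma T_diff: "a \<in> T_ideal S \<Longrightarrow> b \<in> T_ideal S \<Longrightarrow> a - b \<in> T_ideal S"
  using T_ideal.add[of a S "na_smult (-1) b"] T_ideal.smult[of b S "-1"]
  by (simp add: smult_minus1)

lemma T_sum: "(\<And>a. a \<in> A \<Longrightarrow> f a \<in> T_ideal S) \<Longrightarrow> sum f A \<in> T_ideal S"
  by (induction A rule: infinite_finite_induct) (auto intro: T_ideal.zero T_ideal.add)



fun ceq :: "'a namon \<Rightarrow> 'a namon \<Rightarrow> bool" where
  "ceq (NV x) (NV y) = (x = y)"
| "ceq (NM a b) (NM c d) = ((ceq a c \<and> ceq b d) \<or> (ceq a d \<and> ceq b c))"
| "ceq _ _ = False"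

lemma ceq_refl[simp]: "ceq a a"
  by (induction a) auto

lemma ceq_sym: "ceq a b \<Longrightarrow> ceq b a"
  by (induction a b rule: ceq.induct) auto

lemma ceq_trans: "ceq a b \<Longrightarrow> ceq b c \<Longrightarrow> ceq a c"
proof (induction a arbitrary: b c)
  case (NV x) then show ?case by (cases b; cases c) auto
next
  case (NM a1 a2)
  from NM.prems obtain b1 b2 where b: "b = NM b1 b2" by (cases b) auto
  from NM.prems obtain c1 c2 where c: "c = NM c1 c2" by (cases c) (auto simp: b)
  have "(ceq b1 c1 \<and> ceq b2 c2) \<or> (ceq b1 c2 \<and> ceq b2 c1)" "(ceq a1 b1 \<and> ceq a2 b2) \<or> (ceq a1 b2 \<and> ceq a2 b1)"
    using NM.prems by (simp_all add: b c)
  then show ?case unfolding c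
    using NM.IH(1)[of b1 c1] NM.IH(1)[of b1 c2] NM.IH(1)[of b2 c1] NM.IH(1)[of b2 c2]
      NM.IH(2)[of b1 c1] NM.IH(2)[of b1 c2] NM.IH(2)[of b2 c1] NM.IH(2)[of b2 c2] by auto
qed

lemma ceq_map: "ceq a b \<Longrightarrow> ceq (map_namon g a) (map_namon g b)"
  by (induction a b rule: ceq.induct) auto

abbreviation (input) sgl :: "'x namon \<Rightarrow> ('k::field, 'x) napoly" where
  "sgl m \<equiv> Poly_Mapping.single m 1"

lemma comm_inst: "na_mul p q - na_mul q p \<in> T_ideal {comm_identity}"
proof -
  have "na_eval na_mul (\<lambda>i. if i = 0 then p else q) comm_identity \<in> T_ideal {comm_identity}"
    by (rule T_ideal.subst) simp
  then show ?thesis by (simp add: eval_comm)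
qed

lemma ceq_T: "ceq m m' \<Longrightarrow> (sgl m - sgl m' :: ('k::field, 'x) napoly) \<in> T_ideal {comm_identity}"
proof (induction m m' rule: ceq.induct)
  case (1 x y)
  then show ?case by (simp add: T_ideal.zero)
next
  case (2 a b c d)
  have e1: "(sgl (NM a b) - sgl (NM c d) :: ('k, 'x) napoly) =
     na_mul (sgl a - sgl c) (sgl b) + na_mul (sgl c) (sgl b - sgl d)"
    by (simp add: na_mul_minus_left na_mul_minus_right)
  have e2: "(sgl (NM a b) - sgl (NM c d) :: ('k, 'x) napoly) =
     (na_mul (sgl a - sgl d) (sgl b) + na_mul (sgl d) (sgl b - sgl c)) +
     (na_mul (sgl d) (sgl c) - na_mul (sgl c) (sgl d))"
    by (simp add: na_mul_minus_left na_mul_minus_right)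
  show ?case
  proof (cases "ceq a c \<and> ceq b d")
    case True
    then show ?thesis using 2 unfolding e1
      by (intro T_ideal.add T_ideal.mul_left[where p="sgl c"] T_ideal.mul_right) auto
  next
    case False
    then have "ceq a d \<and> ceq b c" using 2 by auto
    then show ?thesis using 2 False unfolding e2
      by (intro T_ideal.add T_ideal.mul_left[where p="sgl d"] T_ideal.mul_right comm_inst) auto
  qed
qed auto

lemma smult_sum_left: "(\<Sum>m\<in>A. na_smult (g m) X) = na_smult (sum g A) X"
  by (induction A rule: infinite_finite_induct) (auto simp: smult_add2)

lemma claim1:
  fixes f :: "('k::field, 'x) napoly"
  assumes "\<And>K. (\<Sum>m\<in>{m\<in>Poly_Mapping.keys f. ceq m K}. Poly_Mapping.lookup f m) = 0"
  shows "f \<in> T_ideal {comm_identity}"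
proof -
  define r where "r m = (SOME m'. m' \<in> Poly_Mapping.keys f \<and> ceq m' m)" for m
  have r: "r m \<in> Poly_Mapping.keys f \<and> ceq (r m) m" if "m \<in> Poly_Mapping.keys f" for m
    unfolding r_def by (rule someI[of _ m]) (use that in simp)
  have rr: "r m = r m0" if "ceq m m0" for m m0
  proof -
    have "(\<lambda>m'. m' \<in> Poly_Mapping.keys f \<and> ceq m' m) = (\<lambda>m'. m' \<in> Poly_Mapping.keys f \<and> ceq m' m0)"
      using that by (auto intro: ceq_trans ceq_sym)
    then show ?thesis unfolding r_def by simp
  qed
  let ?s = "\<lambda>m. na_smult (Poly_Mapping.lookup f m) (sgl m)"
  have f: "f = (\<Sum>m\<in>Poly_Mapping.keys f. ?s m)"
    by (rule poly_sum_singles)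
  have split: "?s m = na_smult (Poly_Mapping.lookup f m) (sgl m - sgl (r m)) +
      na_smult (Poly_Mapping.lookup f m) (sgl (r m))" for m
    by (simp add: smult_diff)
  have A: "(\<Sum>m\<in>Poly_Mapping.keys f. na_smult (Poly_Mapping.lookup f m) (sgl m - sgl (r m)))
     \<in> T_ideal {comm_identity}"
    by (rule T_sum, rule T_ideal.smult, rule ceq_T) (use r ceq_sym in blast)
  have B: "(\<Sum>m\<in>Poly_Mapping.keys f. na_smult (Poly_Mapping.lookup f m) (sgl (r m))) = 0"
  proof -
    have "(\<Sum>m\<in>Poly_Mapping.keys f. na_smult (Poly_Mapping.lookup f m) (sgl (r m))) =
      (\<Sum>R\<in>r ` Poly_Mapping.keys f. \<Sum>m\<in>{m\<in>Poly_Mapping.keys f. r m = R}.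
          na_smult (Poly_Mapping.lookup f m) (sgl (r m)))"
      by (rule sum.image_gen) simp
    also have "\<dots> = (\<Sum>R\<in>r ` Poly_Mapping.keys f. na_smult
        (\<Sum>m\<in>{m\<in>Poly_Mapping.keys f. ceq m R}. Poly_Mapping.lookup f m) (sgl R))"
    proof (rule sum.cong[OF refl])
      fix R assume R: "R \<in> r ` Poly_Mapping.keys f"
      then obtain m0 where m0: "m0 \<in> Poly_Mapping.keys f" "R = r m0" by auto
      have iff: "r m = R \<longleftrightarrow> ceq m R" if m: "m \<in> Poly_Mapping.keys f" for m
      proof
        assume "r m = R"
        then show "ceq m R" using r[OF m] ceq_sym by metis
      next
        assume "ceq m R"
        then have "ceq m m0" using m m0 r by (metis ceq_trans)
        then show "r m = R" using rr m0 by simp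
      qed
      have set: "{m\<in>Poly_Mapping.keys f. r m = R} = {m\<in>Poly_Mapping.keys f. ceq m R}"
        using iff by auto
      show "(\<Sum>m\<in>{m\<in>Poly_Mapping.keys f. r m = R}. na_smult (Poly_Mapping.lookup f m) (sgl (r m))) =
         na_smult (\<Sum>m\<in>{m\<in>Poly_Mapping.keys f. ceq m R}. Poly_Mapping.lookup f m) (sgl R)"
        unfolding set[symmetric] smult_sum_left[symmetric] by (rule sum.cong) auto
    qed
    also have "\<dots> = 0" using assms by simp
    finally show ?thesis .
  qed
  have "f = (\<Sum>m\<in>Poly_Mapping.keys f. na_smult (Poly_Mapping.lookup f m) (sgl m - sgl (r m))) +
     (\<Sum>m\<in>Poly_Mapping.keys f. na_smult (Poly_Mapping.lookup f m) (sgl (r m)))"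
    by (subst f) (simp add: split sum.distrib)
  then show ?thesis using A B by simp
qed



fun leaves :: "'a namon \<Rightarrow> 'a list" where
  "leaves (NV x) = [x]"
| "leaves (NM a b) = leaves a @ leaves b"

fun stdn :: "nat \<Rightarrow> 'a namon \<Rightarrow> nat namon" where
  "stdn n (NV x) = NV n"
| "stdn n (NM a b) = NM (stdn n a) (stdn (n + namon_deg a) b)"

abbreviation "std \<equiv> stdn 0"

fun nle :: "nat namon \<Rightarrow> nat namon \<Rightarrow> bool" where
  "nle (NV i) (NV j) = (i \<le> j)"
| "nle (NV i) (NM _ _) = True"
| "nle (NM _ _) (NV _) = False"
| "nle (NM a b) (NM c d) = (if a = c then nle b d else nle a c)"

fun canon :: "nat namon \<Rightarrow> nat namon" where
  "canon (NV i) = NV i"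
| "canon (NM a b) = (let a' = canon a; b' = canon b in if nle a' b' then NM a' b' else NM b' a')"

definition V :: "nat \<Rightarrow> nat namon" where "V = NV"
declare V_def[simp]

definition pi0 :: "nat namon \<Rightarrow> (nat namon \<times> int) list" where
  "pi0 s = (if s = NV 0 then [(NV 0, 48)]
    else if s = NM (NV 0) (NV 1) then [(NM (NV 0) (NV 1), 24)]
    else if s = NM (NM (NV 0) (NV 1)) (NV 2) then [(NM (NM (NV 0) (NV 1)) (NV 2), 24)]
    else if s = NM (NM (NM (NV 0) (NV 1)) (NV 2)) (NV 3) then
      [(NM (NM (NM (NV 0) (NV 1)) (NV 2)) (NV 3), 12), (NM (NM (NM (NV 0) (NV 2)) (NV 1)) (NV 3), -4),
       (NM (NM (NM (NV 1) (NV 2)) (NV 0)) (NV 3), 4), (NM (NM (NV 0) (NV 1)) (NM (NV 2) (NV 3)), 3),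
       (NM (NM (NV 0) (NV 2)) (NM (NV 1) (NV 3)), 1), (NM (NM (NV 0) (NV 3)) (NM (NV 1) (NV 2)), -1)]
    else if s = NM (NM (NV 0) (NM (NV 1) (NV 2))) (NV 3) then
      [(NM (NM (NM (NV 0) (NV 1)) (NV 2)) (NV 3), -4), (NM (NM (NM (NV 0) (NV 2)) (NV 1)) (NV 3), 4),
       (NM (NM (NM (NV 1) (NV 2)) (NV 0)) (NV 3), 12), (NM (NM (NV 0) (NV 1)) (NM (NV 2) (NV 3)), 1),
       (NM (NM (NV 0) (NV 2)) (NM (NV 1) (NV 3)), -1), (NM (NM (NV 0) (NV 3)) (NM (NV 1) (NV 2)), -3)]
    else if s = NM (NM (NV 0) (NV 1)) (NM (NV 2) (NV 3)) then [(NM (NM (NV 0) (NV 1)) (NM (NV 2) (NV 3)), 6)]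
    else [])"

definition piL :: "nat namon \<Rightarrow> (nat namon \<times> int) list" where
  "piL u = map (\<lambda>(K, c). (map_namon (\<lambda>i. leaves u ! i) K, c)) (pi0 (std u))"

fun ACL :: "'a namon \<Rightarrow> 'a namon list" where
  "ACL (NV x) = [NV x]"
| "ACL (NM a b) = [NM u v. u \<leftarrow> ACL a, v \<leftarrow> ACL b] @ [NM v u. v \<leftarrow> ACL b, u \<leftarrow> ACL a]"

definition expand :: "(int \<times> nat namon) list \<Rightarrow> (nat namon \<times> int) list" where
  "expand L = concat (map (\<lambda>(e, t). map (\<lambda>(K, c). (K, e * c)) (piL t)) L)"

definition gz :: "(nat namon \<times> int) list \<Rightarrow> bool" where
  "gz L = (let L' = map (\<lambda>(T, c). (canon T, c)) L in
     (\<forall>T0 \<in> set (map fst L'). sum_list (map snd (filter (\<lambda>(T, c). T = T0) L')) = 0))"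

definition shapes :: "nat namon list" where
  "shapes = [NV 0, NM (NV 0) (NV 1), NM (NM (NV 0) (NV 1)) (NV 2), NM (NV 0) (NM (NV 1) (NV 2)),
    NM (NM (NM (NV 0) (NV 1)) (NV 2)) (NV 3), NM (NM (NV 0) (NM (NV 1) (NV 2))) (NV 3),
    NM (NM (NV 0) (NV 1)) (NM (NV 2) (NV 3)), NM (NV 0) (NM (NM (NV 1) (NV 2)) (NV 3)),
    NM (NV 0) (NM (NV 1) (NM (NV 2) (NV 3)))]"

lemma checkA: "\<forall>s\<in>set shapes. gz (expand (map (Pair 1) (ACL s)) @ [(s, -48)])"
  by code_simp



lemma deg_map[simp]: "namon_deg (map_namon g m) = namon_deg m"
  by (induction m) auto
lemma length_leaves[simp]: "length (leaves m) = namon_deg m"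
  by (induction m) auto
lemma deg_pos: "namon_deg m \<ge> 1"
  by (induction m) auto
lemma deg_stdn[simp]: "namon_deg (stdn n m) = namon_deg m"
  by (induction m arbitrary: n) auto
lemma stdn_map[simp]: "stdn n (map_namon g m) = stdn n m"
  by (induction m arbitrary: n) auto
lemma leaves_map[simp]: "leaves (map_namon g m) = map g (leaves m)"
  by (induction m) auto

lemma stdn_recon: "map_namon (\<lambda>i. (xs @ leaves m @ ys) ! i) (stdn (length xs) m) = m"
proof (induction m arbitrary: xs ys)
  case (NV x)
  then show ?case by simp
next
  case (NM a b)
  have 1: "map_namon (\<lambda>i. (xs @ (leaves a @ leaves b) @ ys) ! i) (stdn (length xs) a) = a"
    using NM.IH(1)[of xs "leaves b @ ys"] by simp
  have 2: "map_namon (\<lambda>i. (xs @ (leaves a @ leaves b) @ ys) ! i) (stdn (length xs + namon_deg a) b) = b"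
    using NM.IH(2)[of "xs @ leaves a" ys] by simp
  show ?case using 1 2 by simp
qed

lemma std_recon: "map_namon (\<lambda>i. leaves m ! i) (std m) = m"
  using stdn_recon[of "[]" m "[]"] by simp

lemma pi0_wf: "(K', c) \<in> set (pi0 s) \<Longrightarrow> set_namon K' \<subseteq> {..<namon_deg s}"
  by (auto simp: pi0_def split: if_splits)

lemma pi0_deg: "namon_deg s > 4 \<Longrightarrow> pi0 s = []"
  by (auto simp: pi0_def)

definition piv :: "'a namon \<Rightarrow> 'a namon \<Rightarrow> 'k::field_char_0" where
  "piv m K = sum_list (map (\<lambda>(K', c). of_int c * (if ceq (map_namon (\<lambda>i. leaves m ! i) K') K then 1 else 0))
      (pi0 (std m)))"

lemma piv_deg: "namon_deg m > 4 \<Longrightarrow> piv m K = 0"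
  by (simp add: piv_def pi0_deg)

lemma piv_map: "piv (map_namon h u) K = sum_list (map (\<lambda>(K', c). of_int c *
    (if ceq (map_namon h K') K then 1 else 0)) (piL u))"
proof -
  have "map_namon (\<lambda>i. map h (leaves u) ! i) K' = map_namon h (map_namon (\<lambda>i. leaves u ! i) K')"
    if "(K', c) \<in> set (pi0 (std u))" for K' c
  proof -
    have "set_namon K' \<subseteq> {..<namon_deg u}" using pi0_wf[OF that] by simp
    then show ?thesis by (auto simp: namon.map_comp intro!: namon.map_cong0)
  qed
  then show ?thesis
    unfolding piv_def piL_def by (auto simp: comp_def intro!: arg_cong[where f=sum_list] map_cong)
qed

definition Th :: "('x \<Rightarrow> 'v) \<Rightarrow> ('k::field_char_0, 'x) napoly \<Rightarrow> 'v namon \<Rightarrow> 'k" where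
  "Th \<rho> p K = (\<Sum>m\<in>Poly_Mapping.keys p. Poly_Mapping.lookup p m * piv (map_namon \<rho> m) K)"

lemma Th_superset:
  assumes "finite S" "Poly_Mapping.keys p \<subseteq> S"
  shows "Th \<rho> p K = (\<Sum>m\<in>S. Poly_Mapping.lookup p m * piv (map_namon \<rho> m) K)"
  unfolding Th_def
  by (rule sum.mono_neutral_left) (use assms in \<open>auto simp: in_keys_iff\<close>)

lemma Th_add: "Th \<rho> (p + q) K = Th \<rho> p K + Th \<rho> q K"
proof -
  let ?S = "Poly_Mapping.keys p \<union> Poly_Mapping.keys q"
  have "Th \<rho> (p + q) K = (\<Sum>m\<in>?S. Poly_Mapping.lookup (p+q) m * piv (map_namon \<rho> m) K)"
    by (rule Th_superset) (auto dest: set_mp[OF keys_add])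
  then show ?thesis
    by (simp add: Th_superset[of ?S p] Th_superset[of ?S q] lookup_add distrib_right sum.distrib)
qed

lemma Th_diff: "Th \<rho> (p - q) K = Th \<rho> p K - Th \<rho> q K"
proof -
  let ?S = "Poly_Mapping.keys p \<union> Poly_Mapping.keys q"
  have "Th \<rho> (p - q) K = (\<Sum>m\<in>?S. Poly_Mapping.lookup (p-q) m * piv (map_namon \<rho> m) K)"
    by (rule Th_superset) (auto simp: in_keys_iff lookup_minus)
  then show ?thesis
    by (simp add: Th_superset[of ?S p] Th_superset[of ?S q] lookup_minus left_diff_distrib sum_subtractf)
qed

lemma Th_smult: "Th \<rho> (na_smult c p) K = c * Th \<rho> p K"
proof -
  have "Th \<rho> (na_smult c p) K = (\<Sum>m\<in>Poly_Mapping.keys p. Poly_Mapping.lookup (na_smult c p) m * piv (map_namon \<rho> m) K)"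
    by (rule Th_superset) (auto simp: keys_smult[THEN subsetD])
  then show ?thesis by (simp add: Th_def sum_distrib_left mult.assoc)
qed

lemma Th_zero[simp]: "Th \<rho> 0 K = 0"
  by (simp add: Th_def)

lemma Th_single: "Th \<rho> (Poly_Mapping.single m c) K = c * piv (map_namon \<rho> m) K"
  by (simp add: Th_def)

lemma Th_deg: "(\<And>m. m \<in> Poly_Mapping.keys p \<Longrightarrow> namon_deg m > 4) \<Longrightarrow> Th \<rho> p K = 0"
  by (simp add: Th_def piv_deg)

definition toP :: "(int \<times> 'x namon) list \<Rightarrow> ('k::field_char_0, 'x) napoly" where
  "toP L = sum_list (map (\<lambda>(e, t). na_smult (of_int e) (Poly_Mapping.single t 1)) L)"

lemma toP_simps[simp]: "toP [] = 0" "toP ((e, t) # L) = na_smult (of_int e) (Poly_Mapping.single t 1) + toP L"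
  by (simp_all add: toP_def)

lemma Th_toP: "Th \<rho> (toP L) K = sum_list (map (\<lambda>(e, t). of_int e * piv (map_namon \<rho> t) K) L)"
  by (induction L) (auto simp: Th_add Th_smult Th_single)

lemma sum_scale: "(of_int e :: 'k::field_char_0) * sum_list (map (\<lambda>(K', c). of_int c * X K') xs) =
   sum_list (map (\<lambda>(K', c). of_int c * X K') (map (\<lambda>(K, c). (K, e * c)) xs))"
  by (induction xs) (auto simp: algebra_simps)

lemma expand_sum: "sum_list (map (\<lambda>(e, t). of_int e * piv (map_namon h t) K) L) =
   sum_list (map (\<lambda>(K', c). of_int c * (if ceq (map_namon h K') K then 1 else (0::'k::field_char_0))) (expand L))"
proof (induction L)
  case Nil
  then show ?case by (simp add: expand_def)
next
  case (Cons x L)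
  obtain e t where x: "x = (e, t)" by (cases x)
  have 1: "of_int e * piv (map_namon h t) K =
     sum_list (map (\<lambda>(K', c). of_int c * (if ceq (map_namon h K') K then 1 else (0::'k)))
        (map (\<lambda>(K, c). (K, e * c)) (piL t)))"
    unfolding piv_map by (rule sum_scale)
  have 2: "expand (x # L) = map (\<lambda>(K, c). (K, e * c)) (piL t) @ expand L"
    by (simp add: expand_def x)
  show ?case unfolding 2 sum_list_append map_append using Cons.IH 1 by (simp add: x)
qed

lemma Th_toP_map: "Th \<rho> (toP (map (\<lambda>(e, t). (e, map_namon g t)) L)) K =
   sum_list (map (\<lambda>(K', c). of_int c * (if ceq (map_namon (\<lambda>a. \<rho> (g a)) K') K then 1 else 0)) (expand L))"
  unfolding Th_toP expand_sum[symmetric] by (induction L) (auto simp: namon.map_comp comp_def)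

lemma canon_ceq: "ceq T (canon T)"
  by (induction T) (auto simp: Let_def)

definition gsum :: "(nat namon \<times> int) list \<Rightarrow> nat namon \<Rightarrow> int" where
  "gsum L X = sum_list (map snd (filter (\<lambda>(T, c). canon T = X) L))"

lemma filter_canon: "map snd (filter (\<lambda>(T, c). T = X) (map (\<lambda>(T, c). (canon T, c)) L)) =
   map snd (filter (\<lambda>(T, c). canon T = X) L)"
  by (induction L) auto

lemma gz_iff: "gz L \<longleftrightarrow> (\<forall>(T, c)\<in>set L. gsum L (canon T) = 0)"
  by (auto simp: gz_def gsum_def filter_canon comp_def)

lemma sum_list_filter_split:
  fixes f :: "'a \<Rightarrow> 'b::comm_monoid_add"
  shows "sum_list (map f L) = sum_list (map f (filter P L)) + sum_list (map f (filter (\<lambda>y. \<not> P y) L))"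
  by (induction L) (auto simp: add_ac)

lemma sum_const_factor: "sum_list (map (\<lambda>(T, c). of_int c * X) xs) =
   of_int (sum_list (map snd xs)) * (X :: 'k::field_char_0)"
  by (induction xs) (auto simp: algebra_simps)

lemma gz_sound: "gz L \<Longrightarrow> sum_list (map (\<lambda>(T, c). of_int c *
     (if ceq (map_namon h T) K then 1 else 0)) L) = (0::'k::field_char_0)"
proof (induction "length L" arbitrary: L rule: less_induct)
  case less
  show ?case
  proof (cases L)
    case Nil
    then show ?thesis by simp
  next
    case (Cons x rest)
    obtain T0 c0 where x: "x = (T0, c0)" by (cases x)
    define P where "P = (\<lambda>(T::nat namon, c::int). canon T = canon T0)"
    define f where "f = (\<lambda>(T, c). of_int c * (if ceq (map_namon h T) K then 1 else (0::'k)))"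
    have A: "sum_list (map f (filter P L)) = 0"
    proof -
      have "sum_list (map f (filter P L)) = sum_list (map (\<lambda>(T, c). of_int c *
          (if ceq (map_namon h T0) K then 1 else (0::'k))) (filter P L))"
      proof (intro arg_cong[where f=sum_list] map_cong refl)
        fix y assume "y \<in> set (filter P L)"
        then obtain T c where y: "y = (T, c)" "canon T = canon T0" by (auto simp: P_def)
        then have "ceq T T0" using canon_ceq[of T] canon_ceq[of T0] by (metis ceq_sym ceq_trans)
        then have "ceq (map_namon h T) (map_namon h T0)" by (rule ceq_map)
        then have "ceq (map_namon h T) K = ceq (map_namon h T0) K"
          by (metis ceq_sym ceq_trans)
        then show "f y = (\<lambda>(T, c). of_int c * (if ceq (map_namon h T0) K then 1 else (0::'k))) y"
          by (simp add: f_def y)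
      qed
      also have "\<dots> = of_int (sum_list (map snd (filter P L))) * (if ceq (map_namon h T0) K then 1 else 0)"
        by (rule sum_const_factor)
      also have "sum_list (map snd (filter P L)) = gsum L (canon T0)"
        by (simp add: gsum_def P_def)
      also have "\<dots> = 0" using less.prems unfolding gz_iff by (auto simp: Cons x)
      finally show ?thesis by simp
    qed
    have B: "sum_list (map f (filter (\<lambda>y. \<not> P y) L)) = 0"
    proof -
      have len: "length (filter (\<lambda>y. \<not> P y) L) < length L"
        using length_filter_le[of "\<lambda>y. \<not> P y" rest] by (simp add: Cons x P_def less_Suc_eq_le)
      have "gz (filter (\<lambda>y. \<not> P y) L)"
        unfolding gz_iff
      proof (intro ballI, clarify)
        fix T c assume "(T, c) \<in> set (filter (\<lambda>y. \<not> P y) L)"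
        then have T: "(T, c) \<in> set L" "canon T \<noteq> canon T0" by (auto simp: P_def)
        have "gsum (filter (\<lambda>y. \<not> P y) L) (canon T) = gsum L (canon T)"
          unfolding gsum_def using T(2) by (induction L) (auto simp: P_def)
        also have "\<dots> = 0" using less.prems T(1) unfolding gz_iff by auto
        finally show "gsum (filter (\<lambda>y. \<not> P y) L) (canon T) = 0" .
      qed
      then show ?thesis using less.hyps[OF len] by (simp add: f_def)
    qed
    show ?thesis
      using sum_list_filter_split[of f L P] A B by (simp add: f_def)
  qed
qed



definition LSt :: "'a namon \<Rightarrow> 'a namon \<Rightarrow> 'a namon \<Rightarrow> (int \<times> 'a namon) list" where
  "LSt a b c = [(1, NM (NM a b) c), (-1, NM a (NM b c)), (-1, NM (NM b a) c), (1, NM b (NM a c))]"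

definition B1t :: "'a namon \<Rightarrow> 'a namon \<Rightarrow> 'a namon \<Rightarrow> (int \<times> 'a namon) list" where
  "B1t a b c = [(1, NM (NM a b) c), (-1, NM (NM b a) c), (-1, NM (NM a c) b), (1, NM (NM c a) b),
     (1, NM (NM b c) a), (-1, NM (NM c b) a)]"

definition lmul :: "'a namon \<Rightarrow> (int \<times> 'a namon) list \<Rightarrow> (int \<times> 'a namon) list" where
  "lmul w L = map (\<lambda>(e, t). (e, NM w t)) L"
definition rmul :: "'a namon \<Rightarrow> (int \<times> 'a namon) list \<Rightarrow> (int \<times> 'a namon) list" where
  "rmul w L = map (\<lambda>(e, t). (e, NM t w)) L"

lemma checkLS: "gz (expand (LSt (V 0) (V 1) (V 2)))"
   "gz (expand (LSt (NM (V 0) (V 1)) (V 2) (V 3)))"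
   "gz (expand (LSt (V 0) (NM (V 1) (V 2)) (V 3)))"
   "gz (expand (LSt (V 0) (V 1) (NM (V 2) (V 3))))"
   "gz (expand (lmul (V 0) (LSt (V 1) (V 2) (V 3))))"
   "gz (expand (rmul (V 3) (LSt (V 0) (V 1) (V 2))))"
  by code_simp+

lemma checkB1: "gz (expand (B1t (V 0) (V 1) (V 2)))"
   "gz (expand (B1t (NM (V 0) (V 1)) (V 2) (V 3)))"
   "gz (expand (B1t (V 0) (NM (V 1) (V 2)) (V 3)))"
   "gz (expand (B1t (V 0) (V 1) (NM (V 2) (V 3))))"
   "gz (expand (lmul (V 0) (B1t (V 1) (V 2) (V 3))))"
   "gz (expand (rmul (V 3) (B1t (V 0) (V 1) (V 2))))"
  by code_simp+



section \<open>Degrees\<close>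

definition dge :: "nat \<Rightarrow> ('k::field, 'x) napoly \<Rightarrow> bool" where
  "dge n p = (\<forall>m\<in>Poly_Mapping.keys p. n \<le> namon_deg m)"

lemma dge_zero[simp]: "dge n 0" by (simp add: dge_def)
lemma dge_add: "dge n p \<Longrightarrow> dge n q \<Longrightarrow> dge n (p + q)"
  unfolding dge_def by (meson UnE keys_add subsetD)
lemma dge_diff: "dge n p \<Longrightarrow> dge n q \<Longrightarrow> dge n (p - q)"
  unfolding dge_def by (auto simp: in_keys_iff lookup_minus)
lemma dge_smult: "dge n p \<Longrightarrow> dge n (na_smult c p)"
  unfolding dge_def by (meson keys_smult subsetD)
lemma dge_mul: "dge i p \<Longrightarrow> dge j q \<Longrightarrow> dge (i + j) (na_mul p q)"
  unfolding dge_def by (auto dest!: keys_na_mul intro!: add_mono)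
lemma dge_one: "dge 1 p"
  unfolding dge_def by (intro ballI deg_pos)
lemma dge_mono: "dge n p \<Longrightarrow> m \<le> n \<Longrightarrow> dge m p"
  unfolding dge_def by force

lemma Th_dge5: "dge 5 p \<Longrightarrow> Th \<rho> p K = 0"
  by (rule Th_deg) (auto simp: dge_def)

lemma dge_mul3: "dge 3 (na_mul (na_mul P Q) R)" "dge 3 (na_mul P (na_mul Q R))"
  using dge_mul[OF dge_mul[OF dge_one dge_one] dge_one, of P Q R]
    dge_mul[OF dge_one dge_mul[OF dge_one dge_one], of P Q R] by (simp_all add: numeral_3_eq_3)

lemma dge_LSx: "dge 3 (LSx P Q R)"
  unfolding LSx_def na_assoc_def by (intro dge_diff dge_mul3)
lemma dge_B1x: "dge 3 (B1x P Q R)"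
  unfolding B1x_def by (intro dge_diff dge_add dge_mul3)

section \<open>Multilinearity\<close>

lemma LSx_add: "LSx (P + P') Q R = LSx P Q R + LSx P' Q R"
   "LSx P (Q + Q') R = LSx P Q R + LSx P Q' R"
   "LSx P Q (R + R') = LSx P Q R + LSx P Q R'"
  by (simp_all add: LSx_def na_assoc_def na_mul_add_left na_mul_add_right algebra_simps)
lemma LSx_smult: "LSx (na_smult c P) Q R = na_smult c (LSx P Q R)"
   "LSx P (na_smult c Q) R = na_smult c (LSx P Q R)"
   "LSx P Q (na_smult c R) = na_smult c (LSx P Q R)"
  by (simp_all add: LSx_def na_assoc_def na_mul_smult_left na_mul_smult_right smult_diff)
lemma B1x_add: "B1x (P + P') Q R = B1x P Q R + B1x P' Q R"
   "B1x P (Q + Q') R = B1x P Q R + B1x P Q' R"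
   "B1x P Q (R + R') = B1x P Q R + B1x P Q R'"
  by (simp_all add: B1x_def na_mul_add_left na_mul_add_right algebra_simps)
lemma B1x_smult: "B1x (na_smult c P) Q R = na_smult c (B1x P Q R)"
   "B1x P (na_smult c Q) R = na_smult c (B1x P Q R)"
   "B1x P Q (na_smult c R) = na_smult c (B1x P Q R)"
  by (simp_all add: B1x_def na_mul_smult_left na_mul_smult_right smult_diff smult_add)

lemma lin_zero:
  fixes G :: "('k::field, 'x) napoly \<Rightarrow> 'k"
  assumes add: "\<And>p q. G (p + q) = G p + G q"
    and sm: "\<And>c p. G (na_smult c p) = c * G p"
    and sg: "\<And>m. G (Poly_Mapping.single m 1) = 0"
  shows "G p = 0"
proof -
  have z: "G 0 = 0" using sm[of 0 0] by simp
  have "G (sum F A) = (\<Sum>a\<in>A. G (F a))" for F and A :: "'x namon set"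
    by (induction A rule: infinite_finite_induct) (auto simp: z add)
  then have "G p = (\<Sum>m\<in>Poly_Mapping.keys p. G (na_smult (Poly_Mapping.lookup p m) (Poly_Mapping.single m 1)))"
    by (subst poly_sum_singles) simp
  also have "\<dots> = 0" by (simp add: sm sg)
  finally show ?thesis .
qed

lemma trilin_zero:
  fixes F :: "('k::field, 'x) napoly \<Rightarrow> ('k, 'x) napoly \<Rightarrow> ('k, 'x) napoly \<Rightarrow> 'k"
  assumes a1: "\<And>P P' Q R. F (P + P') Q R = F P Q R + F P' Q R"
    and a2: "\<And>P Q Q' R. F P (Q + Q') R = F P Q R + F P Q' R"
    and a3: "\<And>P Q R R'. F P Q (R + R') = F P Q R + F P Q R'"
    and s1: "\<And>c P Q R. F (na_smult c P) Q R = c * F P Q R"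
    and s2: "\<And>c P Q R. F P (na_smult c Q) R = c * F P Q R"
    and s3: "\<And>c P Q R. F P Q (na_smult c R) = c * F P Q R"
    and sg: "\<And>a b c. F (Poly_Mapping.single a 1) (Poly_Mapping.single b 1) (Poly_Mapping.single c 1) = 0"
  shows "F P Q R = 0"
proof -
  have 3: "F (Poly_Mapping.single a 1) (Poly_Mapping.single b 1) R = 0" for a b R
    by (rule lin_zero[where G="\<lambda>R. F _ _ R"]) (simp_all add: a3 s3 sg)
  have 2: "F (Poly_Mapping.single a 1) Q R = 0" for a Q R
    by (rule lin_zero[where G="\<lambda>Q. F _ Q R"]) (simp_all add: a2 s2 3)
  show ?thesis
    by (rule lin_zero[where G="\<lambda>P. F P Q R"]) (simp_all add: a1 s1 2)
qed

lemma toP_append: "toP (A @ B) = toP A + toP B"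
  by (induction A) (auto simp: add.assoc)

lemma toP_lmul: "na_mul (Poly_Mapping.single w 1) (toP L) = toP (lmul w L)"
  by (induction L) (auto simp: lmul_def na_mul_add_right na_mul_smult_right)
lemma toP_rmul: "na_mul (toP L) (Poly_Mapping.single w 1) = toP (rmul w L)"
  by (induction L) (auto simp: rmul_def na_mul_add_left na_mul_smult_left)

lemma LSx_sgl: "LSx (Poly_Mapping.single a 1) (Poly_Mapping.single b 1) (Poly_Mapping.single c 1) =
   (toP (LSt a b c) :: ('k::field_char_0, 'x) napoly)"
  by (simp add: LSx_def na_assoc_def LSt_def smult_minus1 algebra_simps)
lemma B1x_sgl: "B1x (Poly_Mapping.single a 1) (Poly_Mapping.single b 1) (Poly_Mapping.single c 1) =
   (toP (B1t a b c) :: ('k::field_char_0, 'x) napoly)"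
  by (simp add: B1x_def B1t_def smult_minus1 algebra_simps)

lemma Th_toP_big: "(\<forall>(e, t)\<in>set L. namon_deg t > 4) \<Longrightarrow> Th \<rho> (toP L) K = 0"
  unfolding Th_toP by (induction L) (auto simp: piv_deg)

lemma check_inst: "gz (expand L0) \<Longrightarrow> L = map (\<lambda>(e, t). (e, map_namon g t)) L0 \<Longrightarrow>
   Th \<rho> (toP L) K = 0"
  using gz_sound[of "expand L0"] by (simp add: Th_toP_map)

lemma deg1: "namon_deg a = 1 \<Longrightarrow> \<exists>x. a = NV x"
proof (cases a)
  case (NM b c)
  assume "namon_deg a = 1"
  then show ?thesis using deg_pos[of b] deg_pos[of c] NM by simp
qed simp
lemma deg2: "namon_deg a = 2 \<Longrightarrow> \<exists>x y. a = NM (NV x) (NV y)"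
proof (cases a)
  case (NM b c)
  assume "namon_deg a = 2"
  then have "namon_deg b = 1" "namon_deg c = 1" using deg_pos[of b] deg_pos[of c] NM by auto
  then show ?thesis using deg1 NM by blast
qed simp



lemma deg_cases3:
  assumes "namon_deg a + namon_deg b + namon_deg c \<le> 4"
  shows "(namon_deg a = 1 \<and> namon_deg b = 1 \<and> namon_deg c = 1) \<or>
         (namon_deg a = 2 \<and> namon_deg b = 1 \<and> namon_deg c = 1) \<or>
         (namon_deg a = 1 \<and> namon_deg b = 2 \<and> namon_deg c = 1) \<or>
         (namon_deg a = 1 \<and> namon_deg b = 1 \<and> namon_deg c = 2)"
  using assms deg_pos[of a] deg_pos[of b] deg_pos[of c] by linarith

lemma deg_cases4:
  assumes "namon_deg w + (namon_deg a + namon_deg b + namon_deg c) \<le> 4"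
  shows "namon_deg w = 1 \<and> namon_deg a = 1 \<and> namon_deg b = 1 \<and> namon_deg c = 1"
  using assms deg_pos[of a] deg_pos[of b] deg_pos[of c] deg_pos[of w] by linarith

locale idl =
  fixes It :: "'a namon \<Rightarrow> 'a namon \<Rightarrow> 'a namon \<Rightarrow> (int \<times> 'a namon) list"
    and Ic :: "nat namon \<Rightarrow> nat namon \<Rightarrow> nat namon \<Rightarrow> (int \<times> nat namon) list"
  assumes deg: "\<And>e t a b c. (e, t) \<in> set (It a b c) \<Longrightarrow> namon_deg t = namon_deg a + namon_deg b + namon_deg c"
    and inst: "\<And>g a b c. It (map_namon g a) (map_namon g b) (map_namon g c) =
        map (\<lambda>(e, t). (e, map_namon g t)) (Ic a b c)"
    and c1: "gz (expand (Ic (V 0) (V 1) (V 2)))"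
    and c2: "gz (expand (Ic (NM (V 0) (V 1)) (V 2) (V 3)))"
    and c3: "gz (expand (Ic (V 0) (NM (V 1) (V 2)) (V 3)))"
    and c4: "gz (expand (Ic (V 0) (V 1) (NM (V 2) (V 3))))"
    and c5: "gz (expand (lmul (V 0) (Ic (V 1) (V 2) (V 3))))"
    and c6: "gz (expand (rmul (V 3) (Ic (V 0) (V 1) (V 2))))"
begin

lemma mono: "Th \<rho> (toP (It a b c)) K = 0"
proof (cases "namon_deg a + namon_deg b + namon_deg c \<le> 4")
  case False
  then show ?thesis by (intro Th_toP_big) (auto dest: deg)
next
  case True
  from deg_cases3[OF True] show ?thesis
  proof (elim disjE conjE)
    assume "namon_deg a = 1" "namon_deg b = 1" "namon_deg c = 1"
    then obtain x y z where "a = NV x" "b = NV y" "c = NV z" using deg1 by metis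
    then show ?thesis
      using inst[of "\<lambda>i. [x, y, z] ! i" "V 0" "V 1" "V 2"] by (intro check_inst[OF c1, where g="\<lambda>i. [x, y, z] ! i"]) simp
  next
    assume "namon_deg a = 2" "namon_deg b = 1" "namon_deg c = 1"
    then obtain x y z w where "a = NM (NV x) (NV y)" "b = NV z" "c = NV w" using deg1 deg2 by metis
    then show ?thesis
      using inst[of "\<lambda>i. [x, y, z, w] ! i" "NM (V 0) (V 1)" "V 2" "V 3"] by (intro check_inst[OF c2, where g="\<lambda>i. [x, y, z, w] ! i"]) simp
  next
    assume "namon_deg a = 1" "namon_deg b = 2" "namon_deg c = 1"
    then obtain x y z w where "a = NV x" "b = NM (NV y) (NV z)" "c = NV w" using deg1 deg2 by metis
    then show ?thesis
      using inst[of "\<lambda>i. [x, y, z, w] ! i" "V 0" "NM (V 1) (V 2)" "V 3"] by (intro check_inst[OF c3, where g="\<lambda>i. [x, y, z, w] ! i"]) simp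
  next
    assume "namon_deg a = 1" "namon_deg b = 1" "namon_deg c = 2"
    then obtain x y z w where "a = NV x" "b = NV y" "c = NM (NV z) (NV w)" using deg1 deg2 by metis
    then show ?thesis
      using inst[of "\<lambda>i. [x, y, z, w] ! i" "V 0" "V 1" "NM (V 2) (V 3)"] by (intro check_inst[OF c4, where g="\<lambda>i. [x, y, z, w] ! i"]) simp
  qed
qed

lemma mono_l: "Th \<rho> (toP (lmul w (It a b c))) K = 0"
proof (cases "namon_deg w + (namon_deg a + namon_deg b + namon_deg c) \<le> 4")
  case False
  then show ?thesis by (intro Th_toP_big) (auto simp: lmul_def dest: deg)
next
  case True
  then obtain u x y z where "w = NV u" "a = NV x" "b = NV y" "c = NV z"
    using deg_cases4 deg1 by metis
  then show ?thesis
    using inst[of "\<lambda>i. [u, x, y, z] ! i" "V 1" "V 2" "V 3"]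
    by (intro check_inst[OF c5, where g="\<lambda>i. [u, x, y, z] ! i"]) (auto simp: lmul_def)
qed

lemma mono_r: "Th \<rho> (toP (rmul w (It a b c))) K = 0"
proof (cases "namon_deg w + (namon_deg a + namon_deg b + namon_deg c) \<le> 4")
  case False
  then show ?thesis by (intro Th_toP_big) (auto simp: rmul_def dest: deg)
next
  case True
  then obtain u x y z where "w = NV u" "a = NV x" "b = NV y" "c = NV z"
    using deg_cases4 deg1 by metis
  then show ?thesis
    using inst[of "\<lambda>i. [x, y, z, u] ! i" "V 0" "V 1" "V 2"]
    by (intro check_inst[OF c6, where g="\<lambda>i. [x, y, z, u] ! i"]) (auto simp: rmul_def)
qed

end

interpretation LSi: idl LSt LSt
  by (unfold_locales; (rule checkLS | auto simp: LSt_def))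

interpretation B1i: idl B1t B1t
  by (unfold_locales; (rule checkB1 | auto simp: B1t_def))



lemma LSx_Th: "Th \<rho> (LSx P Q R) K = 0"
  by (rule trilin_zero[where F="\<lambda>P Q R. Th \<rho> (LSx P Q R) K"])
     (simp_all add: LSx_add LSx_smult Th_add Th_smult LSx_sgl LSi.mono)

lemma B1x_Th: "Th \<rho> (B1x P Q R) K = 0"
  by (rule trilin_zero[where F="\<lambda>P Q R. Th \<rho> (B1x P Q R) K"])
     (simp_all add: B1x_add B1x_smult Th_add Th_smult B1x_sgl B1i.mono)

lemma LSx_Th_l: "Th \<rho> (na_mul p (LSx P Q R)) K = 0"
proof (rule lin_zero[where G="\<lambda>p. Th \<rho> (na_mul p (LSx P Q R)) K"])
  fix m
  show "Th \<rho> (na_mul (Poly_Mapping.single m 1) (LSx P Q R)) K = 0"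
    by (rule trilin_zero[where F="\<lambda>P Q R. Th \<rho> (na_mul (Poly_Mapping.single m 1) (LSx P Q R)) K"])
       (simp_all add: LSx_add LSx_smult Th_add Th_smult LSx_sgl LSi.mono_l toP_lmul
          na_mul_add_right na_mul_smult_right)
qed (simp_all add: na_mul_add_left na_mul_smult_left Th_add Th_smult)

lemma LSx_Th_r: "Th \<rho> (na_mul (LSx P Q R) p) K = 0"
proof (rule lin_zero[where G="\<lambda>p. Th \<rho> (na_mul (LSx P Q R) p) K"])
  fix m
  show "Th \<rho> (na_mul (LSx P Q R) (Poly_Mapping.single m 1)) K = 0"
    by (rule trilin_zero[where F="\<lambda>P Q R. Th \<rho> (na_mul (LSx P Q R) (Poly_Mapping.single m 1)) K"])
       (simp_all add: LSx_add LSx_smult Th_add Th_smult LSx_sgl LSi.mono_r toP_rmul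
          na_mul_add_left na_mul_smult_left)
qed (simp_all add: na_mul_add_right na_mul_smult_right Th_add Th_smult)

lemma B1x_Th_l: "Th \<rho> (na_mul p (B1x P Q R)) K = 0"
proof (rule lin_zero[where G="\<lambda>p. Th \<rho> (na_mul p (B1x P Q R)) K"])
  fix m
  show "Th \<rho> (na_mul (Poly_Mapping.single m 1) (B1x P Q R)) K = 0"
    by (rule trilin_zero[where F="\<lambda>P Q R. Th \<rho> (na_mul (Poly_Mapping.single m 1) (B1x P Q R)) K"])
       (simp_all add: B1x_add B1x_smult Th_add Th_smult B1x_sgl B1i.mono_l toP_lmul
          na_mul_add_right na_mul_smult_right)
qed (simp_all add: na_mul_add_left na_mul_smult_left Th_add Th_smult)

lemma B1x_Th_r: "Th \<rho> (na_mul (B1x P Q R) p) K = 0"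
proof (rule lin_zero[where G="\<lambda>p. Th \<rho> (na_mul (B1x P Q R) p) K"])
  fix m
  show "Th \<rho> (na_mul (B1x P Q R) (Poly_Mapping.single m 1)) K = 0"
    by (rule trilin_zero[where F="\<lambda>P Q R. Th \<rho> (na_mul (B1x P Q R) (Poly_Mapping.single m 1)) K"])
       (simp_all add: B1x_add B1x_smult Th_add Th_smult B1x_sgl B1i.mono_r toP_rmul
          na_mul_add_left na_mul_smult_left)
qed (simp_all add: na_mul_add_right na_mul_smult_right Th_add Th_smult)

definition Zp :: "('x \<Rightarrow> 'v) \<Rightarrow> ('k::field_char_0, 'x) napoly \<Rightarrow> bool" where
  "Zp \<rho> a = (dge 3 a \<and> (\<forall>K. Th \<rho> a K = 0) \<and> (\<forall>p K. Th \<rho> (na_mul p a) K = 0)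
      \<and> (\<forall>p K. Th \<rho> (na_mul a p) K = 0))"

lemma LSB1_Zp: "a \<in> LSB1_rel \<Longrightarrow> Zp \<rho> a"
  unfolding LSB1_rel_def
proof (induction rule: T_ideal.induct)
  case (subst s \<sigma>)
  then show ?case
    by (auto simp: Zp_def eval_ls eval_B1 dge_LSx dge_B1x LSx_Th B1x_Th LSx_Th_l LSx_Th_r
        B1x_Th_l B1x_Th_r)
next
  case zero
  then show ?case by (simp add: Zp_def)
next
  case (add a b)
  then show ?case by (simp add: Zp_def dge_add Th_add na_mul_add_left na_mul_add_right)
next
  case (smult a c)
  then show ?case by (simp add: Zp_def dge_smult Th_smult na_mul_smult_left na_mul_smult_right)
next
  case (mul_left a p)
  have d: "dge 4 (na_mul p a)" using dge_mul[OF dge_one, of 3 a p] mul_left by (simp add: Zp_def)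
  have "dge 5 (na_mul q (na_mul p a))" for q using dge_mul[OF dge_one d, of q] by simp
  moreover have "dge 5 (na_mul (na_mul p a) q)" for q using dge_mul[OF d dge_one, of q] by simp
  ultimately show ?case using mul_left d by (auto simp: Zp_def Th_dge5 dge_mono)
next
  case (mul_right a p)
  have d: "dge 4 (na_mul a p)" using dge_mul[OF _ dge_one, of 3 a p] mul_right by (simp add: Zp_def)
  have "dge 5 (na_mul q (na_mul a p))" for q using dge_mul[OF dge_one d, of q] by simp
  moreover have "dge 5 (na_mul (na_mul a p) q)" for q using dge_mul[OF d dge_one, of q] by simp
  ultimately show ?case using mul_right d by (auto simp: Zp_def Th_dge5 dge_mono)
qed



lemma toP_mul1: "na_mul (toP (map (Pair 1) X)) (toP (map (Pair 1) Y)) =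
   (toP (map (Pair 1) [NM u v. u \<leftarrow> X, v \<leftarrow> Y]) :: ('k::field_char_0, 'x) napoly)"
proof (induction X)
  case Nil
  then show ?case by simp
next
  case (Cons u X)
  have "na_mul (Poly_Mapping.single u 1) (toP (map (Pair 1) Y)) =
     (toP (map (Pair 1) (map (NM u) Y)) :: ('k, 'x) napoly)"
    by (simp add: toP_lmul lmul_def comp_def)
  then show ?case using Cons by (simp add: na_mul_add_left toP_append)
qed

lemma ACL_map: "ACL (map_namon g m) = map (map_namon g) (ACL m)"
  by (induction m) (auto simp: map_concat comp_def)

lemma eval_AC: "namon_eval na_anticomm (\<lambda>v. na_var (\<iota> v)) m =
   (toP (map (Pair 1) (ACL (map_namon \<iota> m))) :: ('k::field_char_0, 'x) napoly)"
proof (induction m)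
  case (NV x)
  then show ?case by (simp add: na_var_single)
next
  case (NM a b)
  then show ?case
    by (simp add: na_anticomm_def toP_mul1 toP_append del: ACL.simps(2)) (simp add: map_concat toP_append)
qed

lemma deg3: "namon_deg a = 3 \<Longrightarrow> (\<exists>x y z. a = NM (NM (NV x) (NV y)) (NV z)) \<or> (\<exists>x y z. a = NM (NV x) (NM (NV y) (NV z)))"
proof (cases a)
  case (NM b c)
  assume "namon_deg a = 3"
  then have "(namon_deg b = 2 \<and> namon_deg c = 1) \<or> (namon_deg b = 1 \<and> namon_deg c = 2)"
    using deg_pos[of b] deg_pos[of c] NM by auto
  then show ?thesis using deg1 deg2 NM by metis
qed simp

lemma std_shapes: "namon_deg m \<le> 4 \<Longrightarrow> std m \<in> set shapes"
proof (cases m)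
  case (NV x)
  then show ?thesis by (simp add: shapes_def)
next
  case (NM b c)
  assume d: "namon_deg m \<le> 4"
  then have "(namon_deg b = 1 \<and> namon_deg c = 1) \<or> (namon_deg b = 2 \<and> namon_deg c = 1) \<or>
      (namon_deg b = 1 \<and> namon_deg c = 2) \<or> (namon_deg b = 3 \<and> namon_deg c = 1) \<or>
      (namon_deg b = 2 \<and> namon_deg c = 2) \<or> (namon_deg b = 1 \<and> namon_deg c = 3)"
    using deg_pos[of b] deg_pos[of c] NM by auto
  then show ?thesis
  proof (elim disjE conjE)
    assume "namon_deg b = 1" "namon_deg c = 1"
    then obtain x y where "b = NV x" "c = NV y" using deg1 by metis
    then show ?thesis using NM by (simp add: shapes_def)
  next
    assume "namon_deg b = 2" "namon_deg c = 1"
    then obtain x y z where "b = NM (NV x) (NV y)" "c = NV z" using deg1 deg2 by metis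
    then show ?thesis using NM by (simp add: shapes_def)
  next
    assume "namon_deg b = 1" "namon_deg c = 2"
    then obtain x y z where "b = NV x" "c = NM (NV y) (NV z)" using deg1 deg2 by metis
    then show ?thesis using NM by (simp add: shapes_def)
  next
    assume "namon_deg b = 2" "namon_deg c = 2"
    then obtain x y z w where "b = NM (NV x) (NV y)" "c = NM (NV z) (NV w)" using deg2 by metis
    then show ?thesis using NM by (simp add: shapes_def)
  next
    assume "namon_deg b = 3" "namon_deg c = 1"
    then obtain z where c: "c = NV z" using deg1 by metis
    from deg3[OF \<open>namon_deg b = 3\<close>] show ?thesis
    proof (elim disjE exE)
      fix x y w assume "b = NM (NM (NV x) (NV y)) (NV w)"
      then show ?thesis using NM c by (simp add: shapes_def)
    next
      fix x y w assume "b = NM (NV x) (NM (NV y) (NV w))"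
      then show ?thesis using NM c by (simp add: shapes_def)
    qed
  next
    assume "namon_deg b = 1" "namon_deg c = 3"
    then obtain z where b: "b = NV z" using deg1 by metis
    from deg3[OF \<open>namon_deg c = 3\<close>] show ?thesis
    proof (elim disjE exE)
      fix x y w assume "c = NM (NM (NV x) (NV y)) (NV w)"
      then show ?thesis using NM b by (simp add: shapes_def)
    next
      fix x y w assume "c = NM (NV x) (NM (NV y) (NV w))"
      then show ?thesis using NM b by (simp add: shapes_def)
    qed
  qed
qed

lemma A_main:
  assumes "namon_deg m \<le> 4" "\<And>x. x \<in> set_namon m \<Longrightarrow> \<rho> (\<iota> x) = x"
  shows "Th \<rho> (toP (map (Pair 1) (ACL (map_namon \<iota> m))) :: ('k::field_char_0, 'x) napoly) K =
     48 * (if ceq m K then 1 else 0)"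
proof -
  define s where "s = std m"
  define h where "h = (\<lambda>i. \<iota> (leaves m ! i))"
  have mh: "map_namon \<iota> m = map_namon h s"
    using arg_cong[OF std_recon[of m], of "map_namon \<iota>"]
    by (simp add: s_def h_def namon.map_comp comp_def)
  have hs: "map_namon (\<lambda>a. \<rho> (h a)) s = m"
  proof -
    have "map_namon (\<lambda>a. \<rho> (h a)) s = map_namon (\<lambda>x. \<rho> (\<iota> x)) (map_namon (\<lambda>i. leaves m ! i) (std m))"
      by (simp add: s_def h_def namon.map_comp comp_def)
    also have "\<dots> = map_namon (\<lambda>x. \<rho> (\<iota> x)) m" by (simp add: std_recon)
    also have "\<dots> = map_namon id m" using assms(2) by (intro namon.map_cong0) auto
    finally show ?thesis by (simp add: namon.map_id)
  qed
  have L: "map (Pair 1) (ACL (map_namon \<iota> m)) = map (\<lambda>(e, t). (e, map_namon h t)) (map (Pair 1) (ACL s))"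
    by (simp add: mh ACL_map)
  have gz: "gz (expand (map (Pair 1) (ACL s)) @ [(s, -48)])"
    using checkA std_shapes[OF assms(1)] by (simp add: s_def)
  have "sum_list (map (\<lambda>(K', c). of_int c * (if ceq (map_namon (\<lambda>a. \<rho> (h a)) K') K then 1 else (0::'k)))
          (expand (map (Pair 1) (ACL s)) @ [(s, -48)])) = 0"
    by (rule gz_sound[OF gz])
  then show ?thesis
    unfolding L Th_toP_map by (simp add: hs)
qed



lemma Th_sum: "Th \<rho> (sum F A) K = (\<Sum>a\<in>A. Th \<rho> (F a) K)"
  by (induction A rule: infinite_finite_induct) (auto simp: Th_add)

lemma finite_set_namon: "finite (set_namon m)"
  by (induction m) auto

theorem mainTheorem9:
  fixes f :: "('k::field_char_0, 'v) napoly"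
  assumes "infinite (UNIV :: 'x set)"
    and "na_deg_le f 4"
    and "is_identity_LSB1_anticomm TYPE('x) f"
  shows "consequence_of_comm f"
proof -
  define V0 where "V0 = \<Union> (set_namon ` Poly_Mapping.keys f)"
  have fin: "finite V0" unfolding V0_def by (simp add: finite_set_namon)
  obtain e :: "'v \<Rightarrow> nat" and n where e: "e ` V0 = {i. i < n}" "inj_on e V0"
    using finite_imp_inj_to_nat_seg[OF fin] by blast
  obtain c :: "nat \<Rightarrow> 'x" where c: "inj c"
    using infinite_countable_subset[OF assms(1)] by blast
  define \<iota> where "\<iota> = (\<lambda>v. c (e v))"
  have inj: "inj_on \<iota> V0" unfolding \<iota>_def using c e(2)
    by (auto simp: inj_on_def inj_def)
  define \<rho> where "\<rho> = inv_into V0 \<iota>"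
  have \<rho>\<iota>: "\<rho> (\<iota> x) = x" if "x \<in> V0" for x
    unfolding \<rho>_def using inv_into_f_f[OF inj that] .
  define \<sigma> where "\<sigma> = (\<lambda>v. na_var (\<iota> v) :: ('k, 'x) napoly)"
  have mem: "na_eval na_anticomm \<sigma> f \<in> LSB1_rel"
    using assms(3) unfolding is_identity_LSB1_anticomm_def by blast
  have Z: "Th \<rho> (na_eval na_anticomm \<sigma> f) K = 0" for K
    using LSB1_Zp[OF mem, of \<rho>] by (simp add: Zp_def)
  have Th_eval: "Th \<rho> (na_eval na_anticomm \<sigma> f) K =
      (\<Sum>m\<in>Poly_Mapping.keys f. Poly_Mapping.lookup f m * (48 * (if ceq m K then 1 else 0)))" for K
  proof -
    have "Th \<rho> (na_eval na_anticomm \<sigma> f) K = (\<Sum>m\<in>Poly_Mapping.keys f.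
        Poly_Mapping.lookup f m * Th \<rho> (namon_eval na_anticomm \<sigma> m) K)"
      unfolding na_eval_def Th_sum by (simp add: Th_smult)
    also have "\<dots> = (\<Sum>m\<in>Poly_Mapping.keys f. Poly_Mapping.lookup f m * (48 * (if ceq m K then 1 else 0)))"
    proof (rule sum.cong[OF refl])
      fix m assume m: "m \<in> Poly_Mapping.keys f"
      have d: "namon_deg m \<le> 4" using assms(2) m by (simp add: na_deg_le_def)
      have "\<rho> (\<iota> x) = x" if "x \<in> set_namon m" for x
        using \<rho>\<iota> that m unfolding V0_def by blast
      then have "Th \<rho> (namon_eval na_anticomm \<sigma> m) K = 48 * (if ceq m K then 1 else 0)"
        unfolding \<sigma>_def eval_AC by (rule A_main[OF d])
      then show "Poly_Mapping.lookup f m * Th \<rho> (namon_eval na_anticomm \<sigma> m) K =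
          Poly_Mapping.lookup f m * (48 * (if ceq m K then 1 else 0))" by simp
    qed
    finally show ?thesis .
  qed
  have "(\<Sum>m\<in>{m\<in>Poly_Mapping.keys f. ceq m K}. Poly_Mapping.lookup f m) = 0" for K
  proof -
    have "48 * (\<Sum>m\<in>Poly_Mapping.keys f. if ceq m K then Poly_Mapping.lookup f m else 0) = (0::'k)"
      using Z[of K] unfolding Th_eval by (simp add: sum_distrib_left mult_ac if_distrib cong: if_cong)
    then show ?thesis by (simp add: sum.inter_filter)
  qed
  then show ?thesis unfolding consequence_of_comm_def by (rule claim1)
qed

end
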